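(* Let $G$ be a graph and $S\subseteq V(G)$. Then $S$ is a minimal zero forcing set of $G$ if and only if $S$ is a maximal ZIr-set of $G$ and $S\cap F\neq\emptyset$ for every fort $F$ of $G$.
   Context: Graphs are simple, finite, undirected, with nonempty vertex set; $N(v)$ is the open neighborhood. Zero forcing: starting from a set of blue vertices, a blue vertex $u$ changes a white vertex $w$ to blue if $w$ is the only white neighbor of $u$; $B$ is a zero forcing set if eventually all vertices are blue; a minimal zero forcing set is one with no proper subset that is a zero forcing set. A nonempty $F\subseteq V(G)$ is a fort if every $v\in V(G)\setminus F$ satisfies $|N(v)\cap F|\ne 1$. For $S\subseteq V(G)$ and $x\in S$, a private fort of $x$ (relative to $S$) is a fort $F$ with $S\cap F=\{x\}$. $S$ is a ZIr-set if every element of $S$ has a private fort relative to $S$; a maximal ZIr-set is a ZIr-set not properly contained in another ZIr-set. *)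

theory Defs
  imports Main
begin

definition graph :: "'a set \<Rightarrow> ('a \<Rightarrow> 'a \<Rightarrow> bool) \<Rightarrow> bool" where
  "graph V E \<longleftrightarrow> finite V \<and> V \<noteq> {} \<and>
     (\<forall>u v. E u v \<longrightarrow> u \<in> V \<and> v \<in> V) \<and>
     (\<forall>u v. E u v \<longrightarrow> E v u) \<and> (\<forall>v. \<not> E v v)"

definition nbhd :: "'a set \<Rightarrow> ('a \<Rightarrow> 'a \<Rightarrow> bool) \<Rightarrow> 'a \<Rightarrow> 'a set" where
  "nbhd V E v = {u \<in> V. E v u}"

text \<open>One application of the color change rule: blue u forces its unique white neighbor w.\<close>
definition force_step :: "'a set \<Rightarrow> ('a \<Rightarrow> 'a \<Rightarrow> bool) \<Rightarrow> 'a set \<Rightarrow> 'a set \<Rightarrow> bool" where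
  "force_step V E B B' \<longleftrightarrow>
     (\<exists>u w. u \<in> B \<and> w \<in> V - B \<and> nbhd V E u - B = {w} \<and> B' = insert w B)"

definition zero_forcing_set :: "'a set \<Rightarrow> ('a \<Rightarrow> 'a \<Rightarrow> bool) \<Rightarrow> 'a set \<Rightarrow> bool" where
  "zero_forcing_set V E B \<longleftrightarrow> B \<subseteq> V \<and> (force_step V E)\<^sup>*\<^sup>* B V"

definition minimal_zero_forcing_set :: "'a set \<Rightarrow> ('a \<Rightarrow> 'a \<Rightarrow> bool) \<Rightarrow> 'a set \<Rightarrow> bool" where
  "minimal_zero_forcing_set V E S \<longleftrightarrow>
     zero_forcing_set V E S \<and> (\<forall>T. T \<subset> S \<longrightarrow> \<not> zero_forcing_set V E T)"

definition fort :: "'a set \<Rightarrow> ('a \<Rightarrow> 'a \<Rightarrow> bool) \<Rightarrow> 'a set \<Rightarrow> bool" where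
  "fort V E F \<longleftrightarrow> F \<noteq> {} \<and> F \<subseteq> V \<and>
     (\<forall>v \<in> V - F. card (nbhd V E v \<inter> F) \<noteq> 1)"

definition private_fort :: "'a set \<Rightarrow> ('a \<Rightarrow> 'a \<Rightarrow> bool) \<Rightarrow> 'a set \<Rightarrow> 'a \<Rightarrow> 'a set \<Rightarrow> bool" where
  "private_fort V E S x F \<longleftrightarrow> fort V E F \<and> S \<inter> F = {x}"

definition ZIr_set :: "'a set \<Rightarrow> ('a \<Rightarrow> 'a \<Rightarrow> bool) \<Rightarrow> 'a set \<Rightarrow> bool" where
  "ZIr_set V E S \<longleftrightarrow> S \<subseteq> V \<and> (\<forall>x \<in> S. \<exists>F. private_fort V E S x F)"

definition maximal_ZIr_set :: "'a set \<Rightarrow> ('a \<Rightarrow> 'a \<Rightarrow> bool) \<Rightarrow> 'a set \<Rightarrow> bool" where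
  "maximal_ZIr_set V E S \<longleftrightarrow>
     ZIr_set V E S \<and> (\<forall>T. S \<subset> T \<longrightarrow> \<not> ZIr_set V E T)"

end

theory Submission
  imports Defs
begin

lemma step_avoid:
  assumes "force_step V E B B'" "B \<inter> F = {}" "fort V E F" "B \<subseteq> V"
  shows "B' \<inter> F = {}"
proof -
  obtain u w where u: "u \<in> B" "w \<in> V - B" "nbhd V E u - B = {w}" "B' = insert w B"
    using assms(1) unfolding force_step_def by blast
  have uF: "u \<in> V - F" using u assms by blast
  show ?thesis
  proof (rule ccontr)
    assume "B' \<inter> F \<noteq> {}"
    then have wF: "w \<in> F" using u assms(2) by blast
    have "nbhd V E u \<inter> F = {w}"
    proof
      show "nbhd V E u \<inter> F \<subseteq> {w}" using u(3) assms(2) by blast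
      show "{w} \<subseteq> nbhd V E u \<inter> F" using u(3) wF by blast
    qed
    then have "card (nbhd V E u \<inter> F) = 1" by simp
    then show False using assms(3) uF unfolding fort_def by blast
  qed
qed

lemma zfs_hits:
  assumes "zero_forcing_set V E B" "fort V E F"
  shows "B \<inter> F \<noteq> {}"
proof
  assume h: "B \<inter> F = {}"
  have "(force_step V E)\<^sup>*\<^sup>* B V" "B \<subseteq> V" using assms(1) unfolding zero_forcing_set_def by auto
  then have "\<And>C. (force_step V E)\<^sup>*\<^sup>* B C \<Longrightarrow> C \<inter> F = {} \<and> C \<subseteq> V"
  proof -
    fix C assume "(force_step V E)\<^sup>*\<^sup>* B C"
    then show "C \<inter> F = {} \<and> C \<subseteq> V"
    proof (induction rule: rtranclp_induct)
      case base then show ?case using h \<open>B \<subseteq> V\<close> by auto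
    next
      case (step y z)
      then show ?case using step_avoid[of V E y z F] assms(2)
        unfolding force_step_def by blast
    qed
  qed
  then have "V \<inter> F = {}" using \<open>(force_step V E)\<^sup>*\<^sup>* B V\<close> by blast
  then show False using assms(2) unfolding fort_def by blast
qed

lemma step_sub: "force_step V E B B' \<Longrightarrow> B \<subseteq> V \<Longrightarrow> B' \<subseteq> V"
  unfolding force_step_def by blast

lemma reach_sub: "(force_step V E)\<^sup>*\<^sup>* B C \<Longrightarrow> B \<subseteq> V \<Longrightarrow> C \<subseteq> V"
  by (induction rule: rtranclp_induct) (auto dest: step_sub)

lemma reach_mono: "(force_step V E)\<^sup>*\<^sup>* B C \<Longrightarrow> B \<subseteq> C"
  by (induction rule: rtranclp_induct) (auto simp: force_step_def)

lemma hits_zfs: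
  assumes g: "graph V E" and BV: "B \<subseteq> V" and hit: "\<forall>F. fort V E F \<longrightarrow> B \<inter> F \<noteq> {}"
  shows "zero_forcing_set V E B"
proof -
  have fin: "finite V" using g unfolding graph_def by auto
  let ?R = "{C. (force_step V E)\<^sup>*\<^sup>* B C}"
  have Rsub: "?R \<subseteq> Pow V" using reach_sub BV by blast
  have "finite (card ` ?R)" using Rsub fin
    by (meson finite_Pow_iff finite_imageI finite_subset)
  moreover have "B \<in> ?R" by simp
  ultimately obtain m where m: "m \<in> card ` ?R" "\<forall>k \<in> card ` ?R. k \<le> m"
    by (metis Max_ge Max_in empty_iff image_eqI)
  then obtain C where C: "(force_step V E)\<^sup>*\<^sup>* B C" "card C = m" by auto
  have CV: "C \<subseteq> V" using reach_sub[OF C(1) BV] .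
  have nostep: "\<not> force_step V E C C'" for C'
  proof
    assume s: "force_step V E C C'"
    then obtain w where w: "w \<in> V - C" "C' = insert w C" unfolding force_step_def by blast
    have "(force_step V E)\<^sup>*\<^sup>* B C'" using C(1) s by auto
    then have "card C' \<le> m" using m by auto
    moreover have "card C' = card C + 1" using w CV fin
      by (simp add: finite_subset)
    ultimately show False using C by auto
  qed
  have "C = V"
  proof (rule ccontr)
    assume ne: "C \<noteq> V"
    have "fort V E (V - C)"
      unfolding fort_def
    proof (intro conjI ballI)
      show "V - C \<noteq> {}" using ne CV by blast
      show "V - C \<subseteq> V" by blast
      fix v assume v: "v \<in> V - (V - C)"
      show "card (nbhd V E v \<inter> (V - C)) \<noteq> 1"
      proof
        assume "card (nbhd V E v \<inter> (V - C)) = 1"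
        then obtain w where "nbhd V E v \<inter> (V - C) = {w}" by (auto simp: card_Suc_eq)
        moreover have "nbhd V E v - C = nbhd V E v \<inter> (V - C)" unfolding nbhd_def by blast
        ultimately have "force_step V E C (insert w C)" unfolding force_step_def
          using v by blast
        then show False using nostep by blast
      qed
    qed
    then have "B \<inter> (V - C) \<noteq> {}" using hit by blast
    then show False using reach_mono[OF C(1)] by blast
  qed
  then show ?thesis using C(1) BV unfolding zero_forcing_set_def by simp
qed

theorem proposition2p2:
  fixes V :: "'a set" and E :: "'a \<Rightarrow> 'a \<Rightarrow> bool" and S :: "'a set"
  assumes "graph V E" and "S \<subseteq> V"
  shows "minimal_zero_forcing_set V E S \<longleftrightarrow>
           (maximal_ZIr_set V E S \<and> (\<forall>F. fort V E F \<longrightarrow> S \<inter> F \<noteq> {}))"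
proof
  assume m: "minimal_zero_forcing_set V E S"
  then have z: "zero_forcing_set V E S" and mn: "\<forall>T. T \<subset> S \<longrightarrow> \<not> zero_forcing_set V E T"
    unfolding minimal_zero_forcing_set_def by auto
  have hit: "\<forall>F. fort V E F \<longrightarrow> S \<inter> F \<noteq> {}" using zfs_hits[OF z] by blast
  have zir: "ZIr_set V E S" unfolding ZIr_set_def
  proof (intro conjI ballI)
    show "S \<subseteq> V" by fact
    fix x assume x: "x \<in> S"
    have "\<not> zero_forcing_set V E (S - {x})" using mn x by blast
    then obtain F where F: "fort V E F" "(S - {x}) \<inter> F = {}"
      using hits_zfs[OF assms(1), of "S - {x}"] assms(2) by blast
    then have "S \<inter> F = {x}" using hit by blast
    then show "\<exists>F. private_fort V E S x F" using F unfolding private_fort_def by blast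
  qed
  have "\<forall>T. S \<subset> T \<longrightarrow> \<not> ZIr_set V E T"
  proof (intro allI impI notI)
    fix T assume st: "S \<subset> T" and "ZIr_set V E T"
    then obtain y where y: "y \<in> T" "y \<notin> S" by blast
    then obtain F where "fort V E F" "T \<inter> F = {y}"
      using \<open>ZIr_set V E T\<close> unfolding ZIr_set_def private_fort_def by blast
    moreover have "S \<inter> F = {}" using calculation(2) st y by (auto simp: psubset_eq)
    ultimately show False using hit by blast
  qed
  then show "maximal_ZIr_set V E S \<and> (\<forall>F. fort V E F \<longrightarrow> S \<inter> F \<noteq> {})"
    using zir hit unfolding maximal_ZIr_set_def by blast
next
  assume h: "maximal_ZIr_set V E S \<and> (\<forall>F. fort V E F \<longrightarrow> S \<inter> F \<noteq> {})"
  have z: "zero_forcing_set V E S" using hits_zfs[OF assms] h by blast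
  have "\<not> zero_forcing_set V E T" if T: "T \<subset> S" for T
  proof
    assume zt: "zero_forcing_set V E T"
    obtain x where x: "x \<in> S" "x \<notin> T" using T by blast
    then obtain F where "fort V E F" "S \<inter> F = {x}"
      using h unfolding maximal_ZIr_set_def ZIr_set_def private_fort_def by blast
    moreover have "T \<inter> F = {}" using calculation(2) T x by (auto simp: psubset_eq)
    ultimately show False using zfs_hits[OF zt] by blast
  qed
  then show "minimal_zero_forcing_set V E S" using z unfolding minimal_zero_forcing_set_def by blast
qed

end
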